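(* Let $X$ be a Tychonoff space and $AP(X)$ its free abelian precompact group. If $X$ is not reversible, then $AP(X)$ is not $g$-reversible.
   Context: All topological groups are assumed Hausdorff. A topological space $X$ is reversible if every continuous bijection of $X$ onto itself is open. A topological group $G$ is called $g$-reversible if every continuous automorphism of $G$ (i.e. every continuous group isomorphism of $G$ onto itself) is an open map. For a Tychonoff space $X$, the free abelian precompact group $AP(X)$ is the free abelian group on the set $X$ equipped with the initial group topology generated by all homomorphisms $AP(X)\to\mathbb{T}=\mathbb{R}/\mathbb{Z}$ whose restriction to $X$ is continuous; it is a Hausdorff precompact abelian group containing $X$ as a topological subspace, and every continuous map from $X$ into a precompact abelian group extends uniquely to a continuous homomorphism on $AP(X)$. *)

theory Defs
  imports "HOL-Analysis.Analysis" "HOL-Algebra.Free_Abelian_Groups"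
begin

definition Tychonoff_space :: "'a topology \<Rightarrow> bool" where
  "Tychonoff_space X \<longleftrightarrow> completely_regular_space X \<and> Hausdorff_space X"

definition reversible :: "'a topology \<Rightarrow> bool" where
  "reversible X \<longleftrightarrow>
     (\<forall>f. continuous_map X X f \<and> bij_betw f (topspace X) (topspace X) \<longrightarrow> open_map X X f)"

definition g_reversible :: "('g, 'm) monoid_scheme \<Rightarrow> 'g topology \<Rightarrow> bool" where
  "g_reversible G T \<longleftrightarrow>
     (\<forall>f. f \<in> iso G G \<and> continuous_map T T f \<longrightarrow> open_map T T f)"

text \<open>The circle group \<open>\<bbbT> = \<real>/\<int>\<close>, realised (isomorphically, as a topological group)
  as the unit circle in \<open>\<complex>\<close> under multiplication.\<close>
definition circle_group :: "complex monoid" where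
  "circle_group = \<lparr>carrier = sphere 0 1, monoid.mult = (*), one = 1\<rparr>"

definition circle_top :: "complex topology" where
  "circle_top = top_of_set (sphere 0 1)"

definition AP_chars :: "'a topology \<Rightarrow> (('a \<Rightarrow>\<^sub>0 int) \<Rightarrow> complex) set" where
  "AP_chars X = {\<phi>. \<phi> \<in> hom (free_Abelian_group (topspace X)) circle_group \<and>
                     continuous_map X circle_top (\<lambda>x. \<phi> (frag_of x))}"

definition AP_topology :: "'a topology \<Rightarrow> ('a \<Rightarrow>\<^sub>0 int) topology" where
  "AP_topology X =
     subtopology
       (topology_generated_by {\<phi> -` U | \<phi> U. \<phi> \<in> AP_chars X \<and> openin circle_top U})
       (carrier (free_Abelian_group (topspace X)))"

end

theory Submission imports Defs begin
lemma comm_group_circle: "comm_group circle_group"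
proof (rule comm_groupI)
  show "\<exists>y\<in>carrier circle_group. y \<otimes>\<^bsub>circle_group\<^esub> x = \<one>\<^bsub>circle_group\<^esub>"
    if "x \<in> carrier circle_group" for x
  proof -
    from that have x: "norm x = 1" by (simp add: circle_group_def)
    then have "x \<noteq> 0" by auto
    moreover have "norm (inverse x) = 1" using x by (simp add: norm_inverse)
    ultimately show ?thesis by (intro bexI[of _ "inverse x"]) (auto simp: circle_group_def)
  qed
qed (auto simp: circle_group_def norm_mult)


abbreviation "APS X \<equiv> {\<phi> -` U | \<phi> U. \<phi> \<in> AP_chars X \<and> openin circle_top U}"

lemma AP_chars_const: "(\<lambda>_. 1) \<in> AP_chars X"
proof -
  have "(\<lambda>_. 1) \<in> hom (free_Abelian_group (topspace X)) circle_group"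
    by (rule homI) (simp_all add: circle_group_def)
  moreover have "continuous_map X circle_top (\<lambda>x. 1)"
    unfolding circle_top_def by (simp add: continuous_map_in_subtopology)
  ultimately show ?thesis unfolding AP_chars_def by simp
qed

lemma UNIV_APS: "UNIV \<in> APS X"
proof -
  have e: "(\<lambda>_. 1::complex) -` topspace circle_top = UNIV"
    by (simp add: circle_top_def)
  have "openin circle_top (topspace circle_top)" by (rule openin_topspace)
  then have "(\<lambda>_. 1::complex) -` topspace circle_top \<in> APS X"
    using AP_chars_const[of X] by blast
  then show ?thesis unfolding e .
qed

lemma Union_APS: "\<Union>(APS X) = UNIV"
  by (rule top.extremum_uniqueI, rule Union_upper[OF UNIV_APS])

lemma topspace_AP: "topspace (AP_topology X) = carrier (free_Abelian_group (topspace X))"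
  unfolding AP_topology_def topspace_subtopology topology_generated_by_topspace Union_APS by simp

lemma openin_APS:
  assumes "\<phi> \<in> AP_chars X" "openin circle_top U"
  shows "openin (AP_topology X) (\<phi> -` U \<inter> carrier (free_Abelian_group (topspace X)))"
proof -
  have "\<phi> -` U \<in> APS X" using assms by blast
  then have "openin (topology_generated_by (APS X)) (\<phi> -` U)"
    by (rule topology_generated_by_Basis)
  then show ?thesis unfolding AP_topology_def openin_subtopology by blast
qed

lemma cont_frag_of: "continuous_map X (AP_topology X) frag_of"
  unfolding AP_topology_def continuous_map_in_subtopology
proof
  show "continuous_map X (topology_generated_by (APS X)) frag_of"
  proof (rule continuous_on_generated_topo)
    fix U assume "U \<in> APS X"
    then obtain \<phi> V where U: "U = \<phi> -` V" and ph: "\<phi> \<in> AP_chars X" and V: "openin circle_top V" by blast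
    have "continuous_map X circle_top (\<lambda>x. \<phi> (frag_of x))" using ph by (simp add: AP_chars_def)
    from openin_continuous_map_preimage[OF this V]
    have "openin X {x \<in> topspace X. \<phi> (frag_of x) \<in> V}" .
    moreover have "{x \<in> topspace X. \<phi> (frag_of x) \<in> V} = frag_of -` U \<inter> topspace X"
      unfolding U by auto
    ultimately show "openin X (frag_of -` U \<inter> topspace X)" by simp
  next
    show "frag_of ` topspace X \<subseteq> \<Union> (APS X)" unfolding Union_APS by simp
  qed
next
  show "frag_of \<in> topspace X \<rightarrow> carrier (free_Abelian_group (topspace X))" by simp
qed

lemma sep:
  assumes crs: "completely_regular_space X" and U: "openin X U" and x: "x \<in> U"
  obtains W where "openin (AP_topology X) W" "frag_of x \<in> W"
    "\<And>y. y \<in> topspace X \<Longrightarrow> frag_of y \<in> W \<Longrightarrow> y \<in> U"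
proof -
  have xX: "x \<in> topspace X" using U x openin_subset by blast
  have "closedin X (topspace X - U)" using U by blast
  then obtain g :: "'a \<Rightarrow> real" where g: "continuous_map X (top_of_set {0..1}) g"
      and g0: "g x = 0" and g1: "g ` (topspace X - U) \<subseteq> {1}"
    using crs xX x unfolding completely_regular_space_def by blast
  define h where "h y = cis (pi * g y)" for y
  have hS: "h ` topspace X \<subseteq> carrier circle_group"
    by (auto simp: h_def circle_group_def)
  obtain \<phi> where ph: "\<phi> \<in> hom (free_Abelian_group (topspace X)) circle_group"
    and phf: "\<And>y. y \<in> topspace X \<Longrightarrow> \<phi> (frag_of y) = h y"
    using comm_group.free_Abelian_group_universal[OF comm_group_circle hS] by blast
  have gc: "continuous_map X euclideanreal g"
    using g by (simp add: continuous_map_in_subtopology)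
  have "continuous_map X euclidean (\<lambda>y. cis (pi * g y))"
    using gc by (intro continuous_map_compose[OF gc, unfolded o_def, of _ "\<lambda>t. cis (pi * t)"])
       (auto intro!: continuous_intros)
  then have "continuous_map X circle_top h"
    unfolding circle_top_def h_def by (auto simp: continuous_map_in_subtopology)
  then have "continuous_map X circle_top (\<lambda>y. \<phi> (frag_of y))"
    by (rule continuous_map_eq) (simp add: phf)
  with ph have phA: "\<phi> \<in> AP_chars X" by (simp add: AP_chars_def)
  define V where "V = sphere (0::complex) 1 \<inter> {z. Re z > 0}"
  have "openin circle_top V"
    unfolding circle_top_def V_def by (intro openin_open_Int open_halfspace_Re_gt)
  from openin_APS[OF phA this]
  have "openin (AP_topology X) (\<phi> -` V \<inter> carrier (free_Abelian_group (topspace X)))" .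
  moreover have "frag_of x \<in> \<phi> -` V \<inter> carrier (free_Abelian_group (topspace X))"
    using xX by (simp add: phf h_def g0 V_def)
  moreover have "y \<in> U" if "y \<in> topspace X" "frag_of y \<in> \<phi> -` V \<inter> carrier (free_Abelian_group (topspace X))" for y
  proof (rule ccontr)
    assume "y \<notin> U"
    then have "g y = 1" using g1 that(1) by blast
    then show False using that by (simp add: phf h_def V_def)
  qed
  ultimately show ?thesis using that by blast
qed

lemma frag_ext_id:
  assumes "Poly_Mapping.keys c \<subseteq> S" "\<And>x. x \<in> S \<Longrightarrow> k x = x"
  shows "frag_extend (frag_of \<circ> k) c = c"
proof -
  have "frag_extend (frag_of \<circ> k) c = frag_extend frag_of c"
    by (rule frag_extend_eq) (use assms in auto)
  then show ?thesis using frag_expansion[of c] by simp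
qed

lemma frag_ext_keys:
  assumes "Poly_Mapping.keys c \<subseteq> S" "k ` S \<subseteq> S"
  shows "Poly_Mapping.keys (frag_extend (frag_of \<circ> k) c) \<subseteq> S"
  using keys_frag_extend[of "frag_of \<circ> k" c] assms by auto

theorem theorem6p2:
  fixes X :: "'a topology"
  assumes "Tychonoff_space X"
    and "\<not> reversible X"
  shows "\<not> g_reversible (free_Abelian_group (topspace X)) (AP_topology X)"
proof
  assume gr: "g_reversible (free_Abelian_group (topspace X)) (AP_topology X)"
  define S where "S = topspace X"
  define G where "G = free_Abelian_group S"
  have crs: "completely_regular_space X" using assms(1) by (simp add: Tychonoff_space_def)
  obtain f where fc: "continuous_map X X f" and fb: "bij_betw f S S" and fno: "\<not> open_map X X f"
    using assms(2) unfolding reversible_def S_def by blast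
  obtain V where V: "openin X V" and fV: "\<not> openin X (f ` V)"
    using fno unfolding open_map_def by blast
  define g where "g = inv_into S f"
  have fS: "f ` S \<subseteq> S" and gS: "g ` S \<subseteq> S" using fb unfolding g_def
    by (auto simp: bij_betw_def inv_into_into)
  have fg: "f (g x) = x" if "x \<in> S" for x
    using fb that unfolding g_def by (simp add: bij_betw_def f_inv_into_f)
  have gf: "g (f x) = x" if "x \<in> S" for x
    using fb that unfolding g_def by (simp add: bij_betw_def inv_into_f_f)
  define F where "F = frag_extend (frag_of \<circ> f)"
  define Gi where "Gi = frag_extend (frag_of \<circ> g)"
  have Fc: "F c \<in> carrier G" if "c \<in> carrier G" for c
    using that frag_ext_keys[OF _ fS] by (simp add: G_def F_def)
  have Gic: "Gi c \<in> carrier G" if "c \<in> carrier G" for c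
    using that frag_ext_keys[OF _ gS] by (simp add: G_def Gi_def)
  have FGi: "F (Gi c) = c" if "c \<in> carrier G" for c
  proof -
    have "F (Gi c) = frag_extend (frag_of \<circ> (f \<circ> g)) c"
      unfolding F_def Gi_def frag_extend_compose by (simp add: o_assoc)
    also have "\<dots> = c" using that fg by (intro frag_ext_id[of c S]) (auto simp: G_def)
    finally show ?thesis .
  qed
  have GiF: "Gi (F c) = c" if "c \<in> carrier G" for c
  proof -
    have "Gi (F c) = frag_extend (frag_of \<circ> (g \<circ> f)) c"
      unfolding F_def Gi_def frag_extend_compose by (simp add: o_assoc)
    also have "\<dots> = c" using that gf by (intro frag_ext_id[of c S]) (auto simp: G_def)
    finally show ?thesis .
  qed
  have Fhom: "F \<in> hom G G"
  proof (rule homI)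
    show "F x \<in> carrier G" if "x \<in> carrier G" for x using Fc that .
    show "F (x \<otimes>\<^bsub>G\<^esub> y) = F x \<otimes>\<^bsub>G\<^esub> F y" for x y
      by (simp add: G_def F_def frag_extend_add)
  qed
  have Fbij: "bij_betw F (carrier G) (carrier G)"
    by (rule bij_betw_byWitness[where f'=Gi]) (use Fc Gic FGi GiF in auto)
  have Fiso: "F \<in> iso G G" using Fhom Fbij by (simp add: iso_def)
  have Ffrag: "F (frag_of x) = frag_of (f x)" for x by (simp add: F_def)
  have Fcont: "continuous_map (AP_topology X) (AP_topology X) F"
    unfolding AP_topology_def continuous_map_in_subtopology
  proof
    show "continuous_map (subtopology (topology_generated_by (APS X)) (carrier (free_Abelian_group (topspace X))))
           (topology_generated_by (APS X)) F"
    proof (rule continuous_on_generated_topo)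
      fix U assume "U \<in> APS X"
      then obtain \<phi> W where U: "U = \<phi> -` W" and ph: "\<phi> \<in> AP_chars X" and W: "openin circle_top W" by blast
      have phh: "\<phi> \<in> hom G circle_group" and phc: "continuous_map X circle_top (\<lambda>x. \<phi> (frag_of x))"
        using ph by (auto simp: AP_chars_def G_def S_def)
      have "(\<phi> \<circ> F) \<in> hom G circle_group"
        by (rule homI) (use phh Fhom in \<open>auto simp: hom_mult Fc hom_in_carrier\<close>)
      moreover have "continuous_map X circle_top (\<lambda>x. (\<phi> \<circ> F) (frag_of x))"
      proof -
        have "continuous_map X circle_top ((\<lambda>x. \<phi> (frag_of x)) \<circ> f)"
          by (rule continuous_map_compose[OF fc phc])
        then show ?thesis by (simp add: o_def Ffrag)
      qed
      ultimately have "\<phi> \<circ> F \<in> AP_chars X" by (simp add: AP_chars_def G_def S_def)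
      from openin_APS[OF this W]
      have "openin (AP_topology X) ((\<phi> \<circ> F) -` W \<inter> carrier G)" by (simp add: G_def S_def)
      moreover have "(\<phi> \<circ> F) -` W \<inter> carrier G = F -` U \<inter> carrier G" unfolding U by auto
      ultimately show "openin (subtopology (topology_generated_by (APS X)) (carrier (free_Abelian_group (topspace X))))
           (F -` U \<inter> topspace (subtopology (topology_generated_by (APS X)) (carrier (free_Abelian_group (topspace X)))))"
        using topspace_AP[of X] unfolding AP_topology_def G_def S_def by simp
    next
      show "F ` topspace (subtopology (topology_generated_by (APS X)) (carrier (free_Abelian_group (topspace X))))
              \<subseteq> \<Union> (APS X)" unfolding Union_APS by simp
    qed
  next
    show "F \<in> topspace (subtopology (topology_generated_by (APS X)) (carrier (free_Abelian_group (topspace X))))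
          \<rightarrow> carrier (free_Abelian_group (topspace X))"
      using topspace_AP[of X] Fc unfolding AP_topology_def G_def S_def by auto
  qed
  have Fopen: "open_map (AP_topology X) (AP_topology X) F"
    using gr Fiso Fcont unfolding g_reversible_def G_def S_def by blast
  define W where "W = \<Union> {W. openin (AP_topology X) W \<and> (\<forall>y\<in>topspace X. frag_of y \<in> W \<longrightarrow> y \<in> V)}"
  have Wo: "openin (AP_topology X) W" unfolding W_def by (rule openin_Union) blast
  have VS: "V \<subseteq> S" using V openin_subset unfolding S_def by blast
  have Wiff: "frag_of y \<in> W \<longleftrightarrow> y \<in> V" if "y \<in> S" for y
  proof
    assume "frag_of y \<in> W" then show "y \<in> V" using that unfolding W_def S_def by blast
  next
    assume "y \<in> V"
    then obtain W' where "openin (AP_topology X) W'" "frag_of y \<in> W'"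
      "\<And>z. z \<in> topspace X \<Longrightarrow> frag_of z \<in> W' \<Longrightarrow> z \<in> V"
      using sep[OF crs V] by metis
    then show "frag_of y \<in> W" unfolding W_def by blast
  qed
  have WG: "W \<subseteq> carrier G" using openin_subset[OF Wo] topspace_AP[of X] by (simp add: G_def S_def)
  have FWo: "openin (AP_topology X) (F ` W)" using Fopen Wo unfolding open_map_def by blast
  have "openin X {y \<in> topspace X. frag_of y \<in> F ` W}"
    by (rule openin_continuous_map_preimage[OF cont_frag_of FWo])
  moreover have "{y \<in> topspace X. frag_of y \<in> F ` W} = f ` V"
  proof (rule subset_antisym; rule subsetI)
    fix y assume y: "y \<in> {y \<in> topspace X. frag_of y \<in> F ` W}"
    then obtain w where w: "w \<in> W" "frag_of y = F w" by auto
    have yS: "y \<in> S" using y by (simp add: S_def)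
    have "Gi (frag_of y) = frag_of (g y)" by (simp add: Gi_def)
    moreover have "Gi (frag_of y) = w" using w WG GiF by auto
    ultimately have "frag_of (g y) \<in> W" using w by simp
    then have "g y \<in> V" using Wiff gS yS by blast
    then show "y \<in> f ` V" using fg[OF yS] by force
  next
    fix y assume "y \<in> f ` V"
    then obtain v where v: "v \<in> V" "y = f v" by blast
    have "frag_of v \<in> W" using Wiff v VS by blast
    then have "frag_of y \<in> F ` W" using v Ffrag by (metis image_eqI)
    moreover have "y \<in> topspace X" using v VS fS by (auto simp: S_def)
    ultimately show "y \<in> {y \<in> topspace X. frag_of y \<in> F ` W}" by simp
  qed
  ultimately show False using fV by simp
qed
end
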